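(* Let $\alpha\in(0,1)$ be irrational with continued fraction expansion $\alpha=[a_1,a_2,a_3,\dots]$ such that the sequence $(a_n)$ is bounded. Then for every $\lambda\in\mathbb{R}\setminus\{0\}$, every $\theta\in[0,1)$ and every $E\in\mathbb{C}$ the limit $$\gamma_\theta(E)=\lim_{n\to\infty}\frac{1}{n}\ln\|M(\lambda,E,v^n_{\alpha,\theta})\|$$ exists and is independent of $\theta$.
   Context: $\alpha=[a_1,a_2,\dots]$ means $\alpha=1/(a_1+1/(a_2+1/(a_3+\cdots)))$ with positive integers $a_n$. For $\theta\in[0,1)$ let $v_{\alpha,\theta}(n)=\chi_{[1-\alpha,1)}(n\alpha+\theta \bmod 1)$, $n\in\mathbb{Z}$, and let $v^n_{\alpha,\theta}$ denote the word $v_{\alpha,\theta}(1)\dots v_{\alpha,\theta}(n)$ over $\{0,1\}$. For $a\in\mathbb{R}$, $E\in\mathbb{C}$ let $T(\lambda,E,a)=\begin{pmatrix}E-\lambda a&-1\\1&0\end{pmatrix}$, and for a finite word $w=w_1\dots w_n$ over $\{0,1\}$ let $M(\lambda,E,w)=T(\lambda,E,w_n)\cdots T(\lambda,E,w_1)$. $\|\cdot\|$ is the operator norm on $2\times2$ complex matrices with respect to the Euclidean norm on $\mathbb{C}^2$. *)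

theory Defs
  imports "HOL-Analysis.Analysis"
begin

text \<open>Finite continued fraction [a_1,...,a_n] = 1/(a_1 + 1/(a_2 + ... + 1/a_n)),
  with the sequence a indexed from 1 (a 0 is ignored).\<close>
fun cfrac :: "(nat \<Rightarrow> nat) \<Rightarrow> nat \<Rightarrow> real" where
  "cfrac a 0 = 0"
| "cfrac a (Suc n) = 1 / (real (a 1) + cfrac (\<lambda>k. a (Suc k)) n)"

definition is_cf_expansion :: "real \<Rightarrow> (nat \<Rightarrow> nat) \<Rightarrow> bool" where
  "is_cf_expansion \<alpha> a \<longleftrightarrow> (\<forall>n\<ge>1. a n > 0) \<and> (\<lambda>n. cfrac a n) \<longlonglongrightarrow> \<alpha>"

definition vpot :: "real \<Rightarrow> real \<Rightarrow> int \<Rightarrow> real" where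
  "vpot \<alpha> \<theta> n = indicator {1 - \<alpha> ..< 1} (frac (of_int n * \<alpha> + \<theta>))"

definition vword :: "real \<Rightarrow> real \<Rightarrow> nat \<Rightarrow> real list" where
  "vword \<alpha> \<theta> n = map (\<lambda>k. vpot \<alpha> \<theta> (int k)) [1..<Suc n]"

definition Tmat :: "real \<Rightarrow> complex \<Rightarrow> real \<Rightarrow> complex^2^2" where
  "Tmat lam E x = vector [vector [E - complex_of_real (lam * x), -1], vector [1, 0]]"

text \<open>M(lambda,E,w_1...w_n) = T(w_n) ... T(w_1).\<close>
definition Mmat :: "real \<Rightarrow> complex \<Rightarrow> real list \<Rightarrow> complex^2^2" where
  "Mmat lam E w = fold (\<lambda>x A. Tmat lam E x ** A) w (mat 1)"

definition opnorm :: "complex^2^2 \<Rightarrow> real" where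
  "opnorm A = onorm (\<lambda>x. A *v x)"

end

theory Submission
  imports Defs
begin
lemma norm2: "norm (x::complex^2) = sqrt ((cmod (x$1))^2 + (cmod (x$2))^2)"
  by (simp add: norm_vec_def L2_set_def UNIV_2)

lemma opnorm_col: "norm ((A::complex^2^2) *v x) \<le> opnorm A * norm x"
  unfolding opnorm_def by (rule onorm) simp

lemma opnorm_mult: "opnorm ((A::complex^2^2) ** B) \<le> opnorm A * opnorm B"
proof -
  have "(\<lambda>x. (A ** B) *v x) = (\<lambda>x. A *v x) \<circ> (\<lambda>x. B *v x)"
    by (auto simp: matrix_vector_mul_assoc)
  then show ?thesis unfolding opnorm_def
    by (metis onorm_compose matrix_vector_mul_bounded_linear)
qed

lemma opnorm_nonneg: "0 \<le> opnorm A"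
  unfolding opnorm_def by (rule onorm_pos_le) simp

lemma cs2: "(a::real) \<ge> 0 \<Longrightarrow> b \<ge> 0 \<Longrightarrow> c \<ge> 0 \<Longrightarrow> d \<ge> 0 \<Longrightarrow>
   a*d + b*c \<le> sqrt (a^2 + c^2) * sqrt (b^2 + d^2)"
proof -
  assume h: "a \<ge> 0" "b \<ge> 0" "c \<ge> 0" "d \<ge> 0"
  have "(a*d + b*c)^2 \<le> (a^2 + c^2) * (b^2 + d^2)"
    using sum_squares_ge_zero[of "a*b - c*d" 0] by (simp add: power2_eq_square algebra_simps)
  then have "a*d + b*c \<le> sqrt ((a^2 + c^2) * (b^2 + d^2))"
    by (simp add: real_le_rsqrt)
  then show ?thesis by (simp add: real_sqrt_mult)
qed

lemma L1: "cmod (det (A::complex^2^2)) = cmod (A$1$1 * A$2$2 - A$1$2 * A$2$1)" by (simp only: det_2)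
lemma L2: "cmod (a*b - c*d) \<le> cmod a * cmod b + cmod c * cmod (d::complex)"
  by (metis norm_triangle_ineq4 norm_mult)

lemma det_le_opnorm: "cmod (det (A::complex^2^2)) \<le> opnorm A ^ 2"
proof -
  let ?u = "A *v axis 1 1" and ?v = "A *v axis 2 1"
  have u: "?u $ 1 = A$1$1" "?u $ 2 = A$2$1" and v: "?v $ 1 = A$1$2" "?v $ 2 = A$2$2"
    by (simp_all add: matrix_vector_mult_def axis_def UNIV_2)
  have a1: "norm (axis 1 (1::complex) :: complex^2) = 1" by (simp only: norm2) (simp add: axis_def)
  have a2: "norm (axis 2 (1::complex) :: complex^2) = 1" by (simp only: norm2) (simp add: axis_def)
  have nu: "norm ?u \<le> opnorm A" using opnorm_col[of A "axis 1 1"] by (simp only: a1 mult_1_right)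
  have nv: "norm ?v \<le> opnorm A" using opnorm_col[of A "axis 2 1"] by (simp only: a2 mult_1_right)
  have "cmod (det A) = cmod (A$1$1 * A$2$2 - A$1$2 * A$2$1)" by (rule L1)
  also have "\<dots> \<le> cmod (A$1$1) * cmod (A$2$2) + cmod (A$1$2) * cmod (A$2$1)"
    by (rule L2)
  also have "\<dots> \<le> sqrt ((cmod (A$1$1))^2 + (cmod (A$2$1))^2) * sqrt ((cmod (A$1$2))^2 + (cmod (A$2$2))^2)"
    by (rule cs2) (simp_all)
  also have "\<dots> = norm ?u * norm ?v"
    by (simp only: norm2[of ?u] norm2[of ?v] u v)
  also have "\<dots> \<le> opnorm A * opnorm A"
    by (intro mult_mono nu nv opnorm_nonneg) simp
  finally show ?thesis by (simp add: power2_eq_square)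
qed

lemma det_Tmat: "det (Tmat lam E x) = 1"
  by (simp add: Tmat_def det_2)

lemma Mmat_fold: "fold (\<lambda>x A. Tmat lam E x ** A) w B = Mmat lam E w ** B"
proof (induction w arbitrary: B rule: rev_induct)
  case Nil then show ?case by (simp add: Mmat_def)
next
  case (snoc x w) then show ?case by (simp add: Mmat_def matrix_mul_assoc)
qed

lemma Mmat_append: "Mmat lam E (u @ w) = Mmat lam E w ** Mmat lam E u"
proof -
  have "Mmat lam E (u @ w) = fold (\<lambda>x A. Tmat lam E x ** A) w (fold (\<lambda>x A. Tmat lam E x ** A) u (mat 1))"
    by (simp add: Mmat_def)
  also have "\<dots> = Mmat lam E w ** Mmat lam E u" by (simp only: Mmat_fold) (simp add: Mmat_def)
  finally show ?thesis .
qed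

lemma Mmat_Nil: "Mmat lam E [] = mat 1" by (simp add: Mmat_def)
lemma Mmat_single: "Mmat lam E [x] = Tmat lam E x" by (simp add: Mmat_def)

lemma det_Mmat: "det (Mmat lam E w) = 1"
proof (induction w rule: rev_induct)
  case Nil then show ?case by (simp add: Mmat_Nil)
next
  case (snoc x w) then show ?case by (simp add: Mmat_append Mmat_single det_mul det_Tmat)
qed

lemma opnorm_Mmat_ge1: "opnorm (Mmat lam E w) \<ge> 1"
proof -
  have "1 \<le> opnorm (Mmat lam E w) ^ 2" using det_le_opnorm[of "Mmat lam E w"] by (simp add: det_Mmat)
  then show ?thesis using opnorm_nonneg
    by (metis abs_of_nonneg real_sqrt_abs real_sqrt_one real_sqrt_le_iff)
qed

definition K0 :: "real \<Rightarrow> complex \<Rightarrow> real" where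
  "K0 lam E = max (opnorm (Tmat lam E 0)) (opnorm (Tmat lam E 1))"

lemma K0_nonneg: "0 \<le> K0 lam E"
  using opnorm_nonneg[of "Tmat lam E 0"] by (simp add: K0_def le_max_iff_disj)

lemma opnorm_Mmat_le: "set w \<subseteq> {0,1} \<Longrightarrow> opnorm (Mmat lam E w) \<le> K0 lam E ^ length w"
proof (induction w rule: rev_induct)
  case Nil
  have "opnorm (mat 1) \<le> 1" unfolding opnorm_def by (rule onorm_le) simp
  then show ?case by (simp add: Mmat_Nil)
next
  case (snoc x w)
  have x: "opnorm (Tmat lam E x) \<le> K0 lam E" using snoc.prems by (auto simp: K0_def)
  have "opnorm (Mmat lam E (w @ [x])) \<le> opnorm (Tmat lam E x) * opnorm (Mmat lam E w)"
    by (simp add: Mmat_append Mmat_single opnorm_mult)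
  also have "\<dots> \<le> K0 lam E * K0 lam E ^ length w"
  proof (rule mult_mono[OF x])
    show "opnorm (Mmat lam E w) \<le> K0 lam E ^ length w" using snoc by simp
  qed (simp_all add: opnorm_nonneg K0_nonneg)
  finally show ?case by (simp only: length_append_singleton power_Suc)
qed

lemma bounded_nat_range:
  assumes "bounded (range (\<lambda>n. real (a n)))"
  obtains A :: nat where "A \<ge> 1" "\<And>n. a n \<le> A"
proof -
  obtain B where B: "\<And>n. norm (real (a n)) \<le> B" using assms by (auto simp: bounded_iff)
  define A where "A = nat \<lceil>B\<rceil> + 1"
  have "a n \<le> A" for n
  proof -
    have "real (a n) \<le> B" using B[of n] by simp
    then have "real (a n) \<le> real (nat \<lceil>B\<rceil>)" by linarith
    then show ?thesis unfolding A_def by linarith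
  qed
  then show ?thesis using that[of A] by (simp add: A_def)
qed

lemma cfrac_range: "(\<forall>n\<ge>1. a n > 0) \<Longrightarrow> 0 \<le> cfrac a n \<and> cfrac a n \<le> 1"
proof (induction n arbitrary: a)
  case 0 then show ?case by simp
next
  case (Suc n)
  have pos: "\<forall>k\<ge>1. (\<lambda>k. a (Suc k)) k > 0" using Suc.prems by auto
  have h: "0 \<le> cfrac (\<lambda>k. a (Suc k)) n" using Suc.IH[OF pos] by simp
  have "a 1 \<ge> 1" using Suc.prems by (auto simp: Suc_le_eq)
  then have "real (a 1) + cfrac (\<lambda>k. a (Suc k)) n \<ge> 1" using h by linarith
  then show ?case by simp
qed

lemma cf_step:
  assumes cf: "is_cf_expansion x a" and A: "\<And>n. a n \<le> A"
  shows "is_cf_expansion (1/x - a 1) (\<lambda>k. a (Suc k))"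
    and "x = 1 / (a 1 + (1/x - a 1))"
    and "1 / (real A + 1) \<le> x" and "x \<le> 1"
    and "1 \<le> a 1"
proof -
  have pos: "\<forall>n\<ge>1. a n > 0" and lim: "(\<lambda>n. cfrac a n) \<longlonglongrightarrow> x"
    using cf by (auto simp: is_cf_expansion_def)
  have pos': "\<forall>k\<ge>1. (\<lambda>k. a (Suc k)) k > 0" using pos by auto
  show a1: "1 \<le> a 1" using pos by (auto simp: Suc_le_eq)
  have lim1: "(\<lambda>n. cfrac a (Suc n)) \<longlonglongrightarrow> x" using LIMSEQ_Suc[OF lim] .
  have rng: "0 \<le> cfrac (\<lambda>k. a (Suc k)) n \<and> cfrac (\<lambda>k. a (Suc k)) n \<le> 1" for n
    using cfrac_range[OF pos'] .
  have lo: "1 / (real A + 1) \<le> cfrac a (Suc n)" for n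
  proof -
    have "real (a 1) + cfrac (\<lambda>k. a (Suc k)) n \<le> real A + 1" using rng[of n] A[of 1] by linarith
    moreover have "0 < real (a 1) + cfrac (\<lambda>k. a (Suc k)) n" using rng[of n] a1 by linarith
    ultimately show ?thesis by (simp add: frac_le)
  qed
  have hi: "cfrac a (Suc n) \<le> 1" for n
    using cfrac_range[OF pos] by blast
  show xlo: "1 / (real A + 1) \<le> x"
    by (rule LIMSEQ_le_const[OF lim1]) (use lo in auto)
  show "x \<le> 1"
    by (rule LIMSEQ_le_const2[OF lim1]) (use hi in auto)
  have xpos: "x \<noteq> 0" using xlo by (smt (verit) divide_pos_pos of_nat_0_le_iff)
  have eq: "cfrac (\<lambda>k. a (Suc k)) n = 1 / cfrac a (Suc n) - a 1" for n
  proof -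
    have "0 < real (a 1) + cfrac (\<lambda>k. a (Suc k)) n" using rng[of n] a1 by linarith
    then show ?thesis by simp
  qed
  have "(\<lambda>n. 1 / cfrac a (Suc n) - a 1) \<longlonglongrightarrow> 1/x - a 1"
    by (intro tendsto_intros lim1 xpos)
  moreover have "(\<lambda>n. cfrac (\<lambda>k. a (Suc k)) n) = (\<lambda>n. 1 / cfrac a (Suc n) - a 1)"
    by (rule ext) (rule eq)
  ultimately have "(\<lambda>n. cfrac (\<lambda>k. a (Suc k)) n) \<longlonglongrightarrow> 1/x - a 1" by (simp only:)
  then show "is_cf_expansion (1/x - a 1) (\<lambda>k. a (Suc k))"
    using pos' by (simp add: is_cf_expansion_def)
  show "x = 1 / (a 1 + (1/x - a 1))" using xpos by simp
qed

lemma cbound: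
  fixes t :: real assumes "t \<ge> 1"
  shows "1/(4*t^2) \<le> 1/(2*t)" "1/(4*t^2) \<le> 1/(2*(t+1))" "1/(4*t^2) \<le> 1"
proof -
  have t2: "t^2 \<ge> t" using assms by (simp add: power2_eq_square)
  have "2*t \<le> 4*t^2" using t2 assms by linarith
  then show "1/(4*t^2) \<le> 1/(2*t)" using assms by (intro frac_le) auto
  have "4*t \<le> 4*t^2" using t2 by simp
  then have "2*t+2 \<le> 4*t^2" using assms by linarith
  then have "2*(t+1) \<le> 4*t^2" by (simp add: algebra_simps)
  then show "1/(4*t^2) \<le> 1/(2*(t+1))" using assms by (intro frac_le) auto
  have "1 \<le> 4*t^2" using t2 assms by linarith
  then show "1/(4*t^2) \<le> 1" by (simp add: divide_le_eq_1)
qed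

lemma badly_aux:
  fixes A :: nat
  assumes "A \<ge> 1"
  shows "d \<ge> 1 \<Longrightarrow> is_cf_expansion x a \<Longrightarrow> (\<forall>n. a n \<le> A) \<Longrightarrow>
     1/(4*(real A+1)^2) \<le> (real d - 1/2) * \<bar>real d * x - of_int p\<bar>"
proof (induction d arbitrary: x a p rule: less_induct)
  case (less d)
  define c where "c = 1/(4*(real A+1)^2)"
  define b where "b = 1/x - a 1"
  define s where "s = a 1 + b"
  have Apos: "real A + 1 > 0" by simp
  have Aa: "\<And>n. a n \<le> A" using less(4) by auto
  have bcf: "is_cf_expansion b (\<lambda>k. a (Suc k))" unfolding b_def by (rule cf_step(1)[OF less(3) Aa])
  have xb: "x = 1 / s" unfolding s_def b_def by (rule cf_step(2)[OF less(3) Aa])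
  have xlo: "1 / (real A + 1) \<le> x" by (rule cf_step(3)[OF less(3) Aa])
  have xhi: "x \<le> 1" by (rule cf_step(4)[OF less(3) Aa])
  have a1: "1 \<le> a 1" by (rule cf_step(5)[OF less(3) Aa])
  have A': "\<forall>n. (\<lambda>k. a (Suc k)) n \<le> A" using less(4) by auto
  have Aa': "\<And>n. (\<lambda>k. a (Suc k)) n \<le> A" using less(4) by auto
  have blo: "1 / (real A + 1) \<le> b" by (rule cf_step(3)[OF bcf Aa'])
  have bhi: "b \<le> 1" by (rule cf_step(4)[OF bcf Aa'])
  have a1A: "real (a 1) \<le> real A" using less(4) by simp
  have a1r: "1 \<le> real (a 1)" using a1 by simp
  have iApos: "0 < 1 / (real A + 1)" using Apos by simp
  have slo: "s \<ge> 1 + 1 / (real A + 1)" using blo a1r by (simp add: s_def)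
  have shi: "s \<le> real A + 1" using bhi a1A by (simp add: s_def)
  have spos: "s > 0" using slo iApos by linarith
  have xpos: "x \<ge> 0" using xlo iApos by linarith
  have d1: "real d - 1/2 \<ge> 1/2" using less(2) by simp
  have c1: "c \<le> 1/(2*(real A + 1))"
    unfolding c_def using cbound(1)[of "real A + 1"] by simp
  have c2: "c \<le> 1/(2*(real A + 2))"
    unfolding c_def using cbound(2)[of "real A + 1"] by (simp add: add.assoc)
  have goal: "c \<le> (real d - 1/2) * \<bar>real d * x - of_int p\<bar>"
  proof (cases "p \<le> 0")
    case True
    have "real d * x \<ge> 1 * x" using less(2) xpos by (intro mult_right_mono) auto
    then have "real d * x - of_int p \<ge> x" using True by linarith
    then have "\<bar>real d * x - of_int p\<bar> \<ge> 1/(real A + 1)" using xlo by linarith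
    then have "(real d - 1/2) * \<bar>real d * x - of_int p\<bar> \<ge> 1/2 * (1/(real A + 1))"
      using d1 by (intro mult_mono) auto
    moreover have "1/2 * (1/(real A + 1)) = 1/(2*(real A + 1))" by simp
    ultimately show ?thesis using c1 by (metis order_trans)
  next
    case False
    show ?thesis
    proof (cases "p \<ge> int d")
      case True
      have "1 - x \<ge> 1/(real A + 2)"
      proof -
        have e: "(real A + 2)/(real A + 1) = 1 + 1 / (real A + 1)" using Apos by (simp add: field_simps)
        have "s \<ge> (real A + 2)/(real A + 1)" using slo e by simp
        then have "1/s \<le> 1/((real A + 2)/(real A + 1))" using Apos by (intro frac_le) auto
        also have "\<dots> = (real A + 1)/(real A + 2)" by simp
        also have "\<dots> = 1 - 1/(real A + 2)" by (simp add: field_simps)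
        finally show ?thesis using xb by simp
      qed
      moreover have "of_int p \<ge> real d"
        using True by linarith
      moreover have "(real d - 1) * (1 - x) \<ge> 0" using less(2) xhi
        by (intro mult_nonneg_nonneg) auto
      moreover have "(real d - 1) * (1 - x) = real d - real d * x - 1 + x" by algebra
      ultimately have "\<bar>real d * x - of_int p\<bar> \<ge> 1/(real A + 2)" by linarith
      then have "(real d - 1/2) * \<bar>real d * x - of_int p\<bar> \<ge> 1/2 * (1/(real A + 2))"
        using d1 by (intro mult_mono) auto
      moreover have "1/2 * (1/(real A + 2)) = 1/(2*(real A + 2))" by simp
      ultimately show ?thesis using c2 by (metis order_trans)
    next
      case False2: False
      define pn where "pn = nat p"
      have pn: "real pn = of_int p" "pn \<ge> 1" "pn < d" using False False2 by (auto simp: pn_def)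
      define p' where "p' = int d - p * int (a 1)"
      define y where "y = of_int p * b - of_int p'"
      have IH: "c \<le> (real pn - 1/2) * \<bar>real pn * b - of_int p'\<bar>"
        using less(1)[OF pn(3) pn(2) bcf A'] by (simp add: c_def)
      then have IH': "c \<le> (of_int p - 1/2) * \<bar>y\<bar>" using pn(1) by (simp add: y_def)
      have dy: "real d = of_int p * s - y"
        by (simp add: y_def p'_def s_def algebra_simps)
      have "real d * x = (of_int p * s - y) / s" by (simp add: xb dy)
      also have "\<dots> = of_int p - y / s" using spos by (simp add: diff_divide_distrib)
      finally have xy: "\<bar>real d * x - of_int p\<bar> = \<bar>y\<bar> / s" using spos by (simp add: abs_divide)
      show ?thesis
      proof (cases "\<bar>y\<bar> \<le> 1/(2*(real A + 1))")
        case True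
        have ys: "y \<le> (s - 1)/2"
        proof -
          have h1: "1/(real A+1) \<le> s - 1" using slo by linarith
          have h2: "(1/(real A+1))/2 \<le> (s-1)/2" by (rule divide_right_mono[OF h1]) simp
          have h3: "1/(2*(real A + 1)) = (1/(real A+1))/2" by simp
          have "1/(2*(real A + 1)) \<le> (s-1)/2" unfolding h3 by (rule h2)
          then show ?thesis using True by linarith
        qed
        have num: "(real d - 1/2) * \<bar>y\<bar> = (of_int p - 1/2) * \<bar>y\<bar> * s + \<bar>y\<bar> * ((s-1)/2 - y)"
          by (simp add: dy algebra_simps diff_divide_distrib)
        have "(real d - 1/2) * \<bar>real d * x - of_int p\<bar> = ((real d - 1/2) * \<bar>y\<bar>) / s"
          by (simp add: xy)
        also have "\<dots> = (of_int p - 1/2) * \<bar>y\<bar> + \<bar>y\<bar> * ((s-1)/2 - y) / s"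
          using spos by (simp only: num add_divide_distrib) simp
        also have "\<dots> \<ge> (of_int p - 1/2) * \<bar>y\<bar>"
          using ys spos by (simp add: divide_nonneg_pos)
        finally show ?thesis using IH' by (metis order_trans)
      next
        case False
        have "\<bar>y\<bar> / s \<ge> \<bar>y\<bar> / (real A + 1)" using shi spos
          by (intro divide_left_mono) auto
        moreover have "\<bar>y\<bar> / (real A + 1) \<ge> (1/(2*(real A + 1))) / (real A + 1)"
          using False Apos by (intro divide_right_mono) auto
        ultimately have "\<bar>real d * x - of_int p\<bar> \<ge> (1/(2*(real A + 1))) / (real A + 1)"
          using xy by linarith
        then have "(real d - 1/2) * \<bar>real d * x - of_int p\<bar> \<ge> 1/2 * ((1/(2*(real A + 1))) / (real A + 1))"
          using d1 by (intro mult_mono) auto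
        moreover have "1/2 * ((1/(2*(real A + 1))) / (real A + 1)) = c"
          by (simp add: c_def power2_eq_square)
        ultimately show ?thesis by simp
      qed
    qed
  qed
  then show ?case by (simp add: c_def)
qed

lemma badly:
  assumes "is_cf_expansion x a" "\<And>n. a n \<le> A" "A \<ge> 1"
  obtains c where "0 < c" "c \<le> 1" "\<And>(d::nat) (p::int). d \<ge> 1 \<Longrightarrow> c / real d \<le> \<bar>real d * x - of_int p\<bar>"
proof -
  define c where "c = 1/(4*(real A+1)^2)"
  have cpos: "0 < c" by (simp add: c_def)
  have c1: "c \<le> 1" unfolding c_def using cbound(3)[of "real A + 1"] by simp
  have "c / real d \<le> \<bar>real d * x - of_int p\<bar>" if "d \<ge> 1" for d :: nat and p :: int
  proof -
    have h: "c \<le> (real d - 1/2) * \<bar>real d * x - of_int p\<bar>"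
      using badly_aux[OF assms(3) that assms(1)] assms(2) by (simp add: c_def)
    have "(real d - 1/2) * \<bar>real d * x - of_int p\<bar> \<le> real d * \<bar>real d * x - of_int p\<bar>"
      by (intro mult_right_mono) auto
    then have "c \<le> real d * \<bar>real d * x - of_int p\<bar>" using h by linarith
    then show ?thesis using that by (simp add: field_simps)
  qed
  then show ?thesis using that cpos c1 by blast
qed

lemma vword_add: "vword \<alpha> \<theta> (n+m) = vword \<alpha> \<theta> n @ vword \<alpha> (\<theta> + real n * \<alpha>) m"
proof -
  have split: "[1..<Suc (n+m)] = [1..<Suc n] @ [Suc n..<Suc n + m]"
    using upt_add_eq_append[of 1 "Suc n" m] by simp
  have "map (\<lambda>k. vpot \<alpha> \<theta> (int k)) [Suc n..<Suc n + m] = map (\<lambda>k. vpot \<alpha> (\<theta> + real n * \<alpha>) (int k)) [1..<Suc m]"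
  proof (rule nth_equalityI)
    show "length (map (\<lambda>k. vpot \<alpha> \<theta> (int k)) [Suc n..<Suc n + m]) = length (map (\<lambda>k. vpot \<alpha> (\<theta> + real n * \<alpha>) (int k)) [1..<Suc m])"
      by simp
  next
    fix i assume "i < length (map (\<lambda>k. vpot \<alpha> \<theta> (int k)) [Suc n..<Suc n + m])"
    then have i: "i < m" by (simp only: length_map length_upt)
    have eq: "of_int (int (Suc n + i)) * \<alpha> + \<theta> = of_int (int (1 + i)) * \<alpha> + (\<theta> + real n * \<alpha>)"
      by (simp add: algebra_simps)
    have l: "map (\<lambda>k. vpot \<alpha> \<theta> (int k)) [Suc n..<Suc n + m] ! i = vpot \<alpha> \<theta> (int (Suc n + i))"
      using i by (simp del: upt_Suc)
    have r: "map (\<lambda>k. vpot \<alpha> (\<theta> + real n * \<alpha>) (int k)) [1..<Suc m] ! i = vpot \<alpha> (\<theta> + real n * \<alpha>) (int (1 + i))"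
      using i by (simp del: upt_Suc)
    have "vpot \<alpha> \<theta> (int (Suc n + i)) = vpot \<alpha> (\<theta> + real n * \<alpha>) (int (1 + i))"
      unfolding vpot_def by (simp only: eq)
    then show "map (\<lambda>k. vpot \<alpha> \<theta> (int k)) [Suc n..<Suc n + m] ! i = map (\<lambda>k. vpot \<alpha> (\<theta> + real n * \<alpha>) (int k)) [1..<Suc m] ! i"
      using l r by simp
  qed
  then show ?thesis unfolding vword_def split by (simp del: upt_Suc)
qed

lemma vword_shift_int: "vword \<alpha> (\<theta> + of_int z) n = vword \<alpha> \<theta> n"
proof -
  have "vpot \<alpha> (\<theta> + of_int z) k = vpot \<alpha> \<theta> k" for k
  proof -
    have "of_int k * \<alpha> + (\<theta> + of_int z) = (of_int k * \<alpha> + \<theta>) + of_int z" by simp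
    then show ?thesis unfolding vpot_def by (simp only: frac_add_of_int_right)
  qed
  then show ?thesis by (simp add: vword_def)
qed

lemma vword_set: "set (vword \<alpha> \<theta> n) \<subseteq> {0,1}"
  by (auto simp: vword_def vpot_def indicator_def)

lemma vword_length: "length (vword \<alpha> \<theta> n) = n"
  by (simp add: vword_def)

definition F :: "real \<Rightarrow> complex \<Rightarrow> real \<Rightarrow> nat \<Rightarrow> real \<Rightarrow> real" where
  "F lam E \<alpha> n \<theta> = ln (opnorm (Mmat lam E (vword \<alpha> \<theta> n)))"

lemma F_nonneg: "0 \<le> F lam E \<alpha> n \<theta>"
  unfolding F_def using opnorm_Mmat_ge1 by simp

lemma F_sub: "F lam E \<alpha> (n+m) \<theta> \<le> F lam E \<alpha> n \<theta> + F lam E \<alpha> m (\<theta> + real n * \<alpha>)"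
proof -
  let ?A = "Mmat lam E (vword \<alpha> \<theta> n)" and ?B = "Mmat lam E (vword \<alpha> (\<theta> + real n * \<alpha>) m)"
  have e: "Mmat lam E (vword \<alpha> \<theta> (n+m)) = ?B ** ?A"
    by (simp add: vword_add Mmat_append)
  have pA: "opnorm ?A \<ge> 1" and pB: "opnorm ?B \<ge> 1" by (rule opnorm_Mmat_ge1)+
  have pC: "opnorm (?B ** ?A) \<ge> 1" using opnorm_Mmat_ge1 e by metis
  have "ln (opnorm (?B ** ?A)) \<le> ln (opnorm ?B * opnorm ?A)"
    using pA pB pC opnorm_mult[of ?B ?A] by (subst ln_le_cancel_iff) auto
  also have "\<dots> = ln (opnorm ?A) + ln (opnorm ?B)" using pA pB by (simp add: ln_mult)
  finally show ?thesis unfolding F_def e .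
qed

definition KK :: "real \<Rightarrow> complex \<Rightarrow> real" where "KK lam E = ln (K0 lam E)"

lemma K0_ge1: "K0 lam E \<ge> 1"
proof -
  have "opnorm (Mmat lam E [0]) \<ge> 1" by (rule opnorm_Mmat_ge1)
  then show ?thesis by (simp add: Mmat_single K0_def)
qed

lemma KK_nonneg: "0 \<le> KK lam E" using K0_ge1 by (simp add: KK_def)

lemma F_le: "F lam E \<alpha> n \<theta> \<le> KK lam E * real n"
proof -
  have "opnorm (Mmat lam E (vword \<alpha> \<theta> n)) \<le> K0 lam E ^ n"
    using opnorm_Mmat_le[OF vword_set] by (simp add: vword_length)
  moreover have "opnorm (Mmat lam E (vword \<alpha> \<theta> n)) > 0" using opnorm_Mmat_ge1 by (rule less_le_trans[rotated]) simp
  ultimately have "ln (opnorm (Mmat lam E (vword \<alpha> \<theta> n))) \<le> ln (K0 lam E ^ n)"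
    using K0_ge1 by (subst ln_le_cancel_iff) auto
  also have "\<dots> = real n * ln (K0 lam E)" using K0_ge1 by (simp add: ln_realpow)
  finally show ?thesis by (simp add: F_def KK_def mult.commute)
qed

lemma vpot_floor:
  assumes "0 < \<alpha>" "\<alpha> < 1"
  shows "vpot \<alpha> \<theta> k = of_int (\<lfloor>of_int (k+1) * \<alpha> + \<theta>\<rfloor> - \<lfloor>of_int k * \<alpha> + \<theta>\<rfloor>)"
proof -
  define y where "y = of_int k * \<alpha> + \<theta>"
  have yy: "of_int (k+1) * \<alpha> + \<theta> = y + \<alpha>" by (simp add: y_def algebra_simps)
  have fy: "0 \<le> frac y" "frac y < 1" by (auto simp: frac_lt_1)
  have dec: "y + \<alpha> = of_int \<lfloor>y\<rfloor> + (frac y + \<alpha>)" by (simp add: frac_def)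
  show ?thesis
  proof (cases "1 - \<alpha> \<le> frac y")
    case True
    have "\<lfloor>y + \<alpha>\<rfloor> = \<lfloor>y\<rfloor> + 1"
      using True fy assms by (subst dec, subst floor_unique[of "\<lfloor>y\<rfloor> + 1"]) auto
    then show ?thesis using True fy unfolding vpot_def yy y_def[symmetric] by (simp add: indicator_def)
  next
    case False
    have "\<lfloor>y + \<alpha>\<rfloor> = \<lfloor>y\<rfloor>"
      using False fy assms by (subst dec, subst floor_unique[of "\<lfloor>y\<rfloor>"]) auto
    then show ?thesis using False fy unfolding vpot_def yy y_def[symmetric] by (simp add: indicator_def)
  qed
qed

lemma sp_int:
  assumes sp: "\<And>(d::nat) (p::int). d \<ge> 1 \<Longrightarrow> c / real d \<le> \<bar>real d * \<alpha> - of_int p\<bar>"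
    and D: "D \<noteq> 0"
  shows "c / of_int \<bar>D\<bar> \<le> \<bar>of_int D * \<alpha> - of_int P\<bar>"
proof (cases "D > 0")
  case True
  have "c / real (nat D) \<le> \<bar>real (nat D) * \<alpha> - of_int P\<bar>" using True by (intro sp) simp
  then show ?thesis using True by simp
next
  case False
  then have Dn: "D < 0" using D by simp
  have "c / real (nat (-D)) \<le> \<bar>real (nat (-D)) * \<alpha> - of_int (-P)\<bar>" using Dn by (intro sp) simp
  moreover have "real (nat (-D)) = - of_int D" using Dn by simp
  moreover have "\<bar>- of_int D * \<alpha> - of_int (-P)\<bar> = \<bar>of_int D * \<alpha> - of_int P\<bar>"
    by (simp add: abs_minus_commute algebra_simps)
  moreover have "of_int \<bar>D\<bar> = - (of_int D :: real)" using Dn by simp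
  ultimately show ?thesis by simp
qed

lemma cyl:
  assumes a01: "0 < \<alpha>" "\<alpha> < 1" and c: "0 < c" "c \<le> 1"
    and sp: "\<And>(d::nat) (p::int). d \<ge> 1 \<Longrightarrow> c / real d \<le> \<bar>real d * \<alpha> - of_int p\<bar>"
    and n: "n \<ge> 1"
  obtains u where "\<And>s. u \<le> s \<Longrightarrow> s < u + c / real n \<Longrightarrow> vword \<alpha> s n = vword \<alpha> \<theta> n"
proof -
  define \<phi> where "\<phi> k = frac (real k * \<alpha> + \<theta>)" for k :: nat
  define \<Phi> where "\<Phi> = \<phi> ` {1..n+1}"
  have fin: "finite \<Phi>" and ne: "\<Phi> \<noteq> {}" by (auto simp: \<Phi>_def)
  define m where "m = Min \<Phi>"
  define M where "M = Max \<Phi>"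
  have "M \<in> \<Phi>" using Max_in[OF fin ne] by (simp add: M_def)
  then obtain i where i: "i \<in> {1..n+1}" "M = \<phi> i" unfolding \<Phi>_def by blast
  have "m \<in> \<Phi>" using Min_in[OF fin ne] by (simp add: m_def)
  then obtain j where j: "j \<in> {1..n+1}" "m = \<phi> j" unfolding \<Phi>_def by blast
  have mle: "m \<le> \<phi> k" and Mge: "\<phi> k \<le> M" if "k \<in> {1..n+1}" for k
    using that fin by (auto simp: m_def M_def \<Phi>_def)
  have phi01: "0 \<le> \<phi> k" "\<phi> k < 1" for k by (auto simp: \<phi>_def frac_lt_1)
  have cn: "c / real n \<le> c" using c n by (simp add: divide_le_eq)
  have gap: "c / real n \<le> 1 - M + m"
  proof (cases "i = j")
    case True
    then have "1 - M + m = 1" using i j by simp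
    then show ?thesis using cn c by simp
  next
    case False
    define D where "D = int i - int j"
    define P where "P = 1 + \<lfloor>real i * \<alpha> + \<theta>\<rfloor> - \<lfloor>real j * \<alpha> + \<theta>\<rfloor>"
    have D0: "D \<noteq> 0" using False by (simp add: D_def)
    have e: "1 - M + m = - (of_int D * \<alpha> - of_int P)"
      by (simp add: i(2) j(2) \<phi>_def frac_def D_def P_def algebra_simps)
    have pos: "1 - M + m \<ge> 0" using phi01[of i] phi01[of j] i j by simp
    have "1 - M + m = \<bar>of_int D * \<alpha> - of_int P\<bar>" using e pos by linarith
    moreover have "c / of_int \<bar>D\<bar> \<le> \<bar>of_int D * \<alpha> - of_int P\<bar>" by (rule sp_int[OF sp D0])
    moreover have "c / real n \<le> c / of_int \<bar>D\<bar>"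
    proof -
      have "\<bar>D\<bar> \<le> int n" using i(1) j(1) by (auto simp: D_def)
      then have "(of_int \<bar>D\<bar> :: real) \<le> real n" by linarith
      moreover have "(0::real) < of_int \<bar>D\<bar>" using D0 by simp
      ultimately show ?thesis using c by (intro divide_left_mono) auto
    qed
    ultimately show ?thesis by linarith
  qed
  show ?thesis
  proof (rule that[of "\<theta> - m"])
    fix s assume s1: "\<theta> - m \<le> s" and s2: "s < \<theta> - m + c / real n"
    define t where "t = s - \<theta>"
    have fl: "\<lfloor>real k * \<alpha> + s\<rfloor> = \<lfloor>real k * \<alpha> + \<theta>\<rfloor>" if k: "k \<in> {1..n+1}" for k
    proof -
      have dec: "real k * \<alpha> + s = of_int \<lfloor>real k * \<alpha> + \<theta>\<rfloor> + (\<phi> k + t)"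
        by (simp add: \<phi>_def t_def frac_def)
      have "0 \<le> \<phi> k + t" using mle[OF k] s1 by (simp add: t_def)
      moreover have "\<phi> k + t < 1" using Mge[OF k] s2 gap by (simp add: t_def)
      ultimately show ?thesis by (subst dec, intro floor_unique) auto
    qed
    have vp: "vpot \<alpha> s (int k) = vpot \<alpha> \<theta> (int k)" if k: "k \<in> {1..n}" for k
    proof -
      have k1: "k \<in> {1..n+1}" "k + 1 \<in> {1..n+1}" using k by auto
      have e1: "(of_int (int k + 1) :: real) = real (k+1)" by simp
      have e2: "(of_int (int k) :: real) = real k" by simp
      have "vpot \<alpha> s (int k) = of_int (\<lfloor>real (k+1) * \<alpha> + s\<rfloor> - \<lfloor>real k * \<alpha> + s\<rfloor>)"
        using vpot_floor[OF a01, of s "int k"] by (simp only: e1 e2)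
      also have "\<dots> = of_int (\<lfloor>real (k+1) * \<alpha> + \<theta>\<rfloor> - \<lfloor>real k * \<alpha> + \<theta>\<rfloor>)"
        using fl[OF k1(1)] fl[OF k1(2)] by simp
      also have "\<dots> = vpot \<alpha> \<theta> (int k)"
        using vpot_floor[OF a01, of \<theta> "int k"] by (simp only: e1 e2)
      finally show ?thesis .
    qed
    show "vword \<alpha> s n = vword \<alpha> \<theta> n"
      unfolding vword_def by (rule map_cong) (use vp in auto)
  qed
qed

lemma hit:
  assumes q: "q \<ge> 1" and eta: "0 < frac (real q * \<alpha>)" "frac (real q * \<alpha>) \<le> lw"
  shows "\<exists>k \<le> nat \<lceil>1 / frac (real q * \<alpha>)\<rceil>. \<exists>z::int.
           u \<le> s + real (k*q) * \<alpha> + of_int z \<and> s + real (k*q) * \<alpha> + of_int z < u + lw"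
proof -
  define \<eta> where "\<eta> = frac (real q * \<alpha>)"
  define t where "t = frac (u - s)"
  have t01: "0 \<le> t" "t < 1" by (auto simp: t_def frac_lt_1)
  have etap: "0 < \<eta>" using eta by (simp add: \<eta>_def)
  define k where "k = nat \<lceil>t / \<eta>\<rceil>"
  have tk: "0 \<le> t / \<eta>" using t01 etap by simp
  have kr: "real k = of_int \<lceil>t / \<eta>\<rceil>" using tk by (simp add: k_def)
  have k1: "t \<le> real k * \<eta>"
  proof -
    have "t / \<eta> \<le> real k" using kr ceiling_correct[of "t / \<eta>"] by linarith
    then show ?thesis using etap by (simp add: divide_le_eq)
  qed
  have k2: "real k * \<eta> < t + \<eta>"
  proof -
    have "real k < t / \<eta> + 1" using kr ceiling_correct[of "t / \<eta>"] by linarith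
    then have "real k * \<eta> < (t / \<eta> + 1) * \<eta>" using etap by (simp add: mult_strict_right_mono)
    also have "\<dots> = t + \<eta>" using etap by (simp add: field_simps)
    finally show ?thesis .
  qed
  have kle: "k \<le> nat \<lceil>1 / \<eta>\<rceil>"
  proof -
    have "t / \<eta> \<le> 1 / \<eta>" using t01 etap by (simp add: divide_right_mono)
    then have "\<lceil>t / \<eta>\<rceil> \<le> \<lceil>1 / \<eta>\<rceil>" by (rule ceiling_mono)
    then show ?thesis unfolding k_def by (rule nat_mono)
  qed
  define fl where "fl = \<lfloor>real q * \<alpha>\<rfloor>"
  define z where "z = \<lfloor>u - s\<rfloor> - int k * fl"
  have qa: "real q * \<alpha> = of_int fl + \<eta>" by (simp add: \<eta>_def frac_def fl_def)
  have us: "u - s = of_int \<lfloor>u - s\<rfloor> + t" by (simp add: t_def frac_def)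
  have key: "s + real (k*q) * \<alpha> + of_int z = u - t + real k * \<eta>"
  proof -
    have "real (k*q) * \<alpha> = real k * (real q * \<alpha>)" by simp
    also have "\<dots> = real k * of_int fl + real k * \<eta>" unfolding qa by (simp add: algebra_simps)
    finally have "s + real (k*q) * \<alpha> + of_int z = s + real k * of_int fl + real k * \<eta> + of_int \<lfloor>u - s\<rfloor> - of_int (int k * fl)"
      by (simp add: z_def)
    also have "\<dots> = s + of_int \<lfloor>u - s\<rfloor> + real k * \<eta>" by simp
    also have "\<dots> = u - t + real k * \<eta>" using us by linarith
    finally show ?thesis .
  qed
  show ?thesis
  proof (intro exI conjI)
    show "k \<le> nat \<lceil>1 / frac (real q * \<alpha>)\<rceil>" using kle by (simp add: \<eta>_def)
    show "u \<le> s + real (k*q) * \<alpha> + of_int z" using key k1 by linarith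
    show "s + real (k*q) * \<alpha> + of_int z < u + lw" using key k2 eta by (simp add: \<eta>_def)
  qed
qed

lemma dens:
  assumes "\<alpha> \<notin> \<rat>" "0 < lw" "lw \<le> 1"
  obtains q :: nat where "q \<ge> 1" "lw/2 < frac (real q * \<alpha>)" "frac (real q * \<alpha>) < lw"
proof -
  obtain k where k: "k > 0" "\<bar>frac (real k * \<alpha>) - 3*lw/4\<bar> < lw/4"
    using Kronecker_approx_1_explicit[OF assms(1), of "3*lw/4" "lw/4"] assms by auto
  have "lw/2 < frac (real k * \<alpha>)" "frac (real k * \<alpha>) < lw"
    using k(2) unfolding abs_less_iff by linarith+
  then show ?thesis using that[of k] k(1) by simp
qed

lemma abs_decomp:
  fixes g B X :: real
  assumes UB: "\<And>m s. F lam E \<alpha> m s \<le> g * real m + B" and B: "B \<ge> 0"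
  shows "finite J \<Longrightarrow> card J = k \<Longrightarrow> (\<forall>j\<in>J. j + n \<le> N \<and> F lam E \<alpha> n (s + real j * \<alpha>) = X)
    \<Longrightarrow> (\<forall>j\<in>J. \<forall>j'\<in>J. j < j' \<longrightarrow> j + n \<le> j')
    \<Longrightarrow> F lam E \<alpha> N s \<le> g * (real N - real n * real k) + B * (real k + 1) + real k * X"
proof (induction k arbitrary: J N)
  case 0
  show ?case using UB[of N s] by simp
next
  case (Suc k)
  have ne: "J \<noteq> {}" using Suc.prems(2) by auto
  define jm where "jm = Max J"
  have jm: "jm \<in> J" using Max_in[OF Suc.prems(1) ne] by (simp add: jm_def)
  define J' where "J' = J - {jm}"
  have fin': "finite J'" using Suc.prems(1) by (simp add: J'_def)
  have card': "card J' = k" using Suc.prems(2) jm Suc.prems(1) by (simp add: J'_def)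
  have lt: "j < jm" if "j \<in> J'" for j
  proof -
    have "j \<le> jm" using that Suc.prems(1) by (simp add: J'_def jm_def)
    moreover have "j \<noteq> jm" using that by (simp add: J'_def)
    ultimately show ?thesis by simp
  qed
  have P1: "\<forall>j\<in>J'. j + n \<le> jm \<and> F lam E \<alpha> n (s + real j * \<alpha>) = X"
  proof
    fix j assume j: "j \<in> J'"
    then have jJ: "j \<in> J" by (simp add: J'_def)
    have "j + n \<le> jm" using Suc.prems(4) jJ jm lt[OF j] by blast
    moreover have "F lam E \<alpha> n (s + real j * \<alpha>) = X" using Suc.prems(3) jJ by blast
    ultimately show "j + n \<le> jm \<and> F lam E \<alpha> n (s + real j * \<alpha>) = X" by blast
  qed
  have P2: "\<forall>j\<in>J'. \<forall>j'\<in>J'. j < j' \<longrightarrow> j + n \<le> j'" using Suc.prems(4) by (auto simp: J'_def)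
  have IH: "F lam E \<alpha> jm s \<le> g * (real jm - real n * real k) + B * (real k + 1) + real k * X"
    using Suc.IH[OF fin' card' P1 P2] .
  have jmN: "jm + n \<le> N" and Xjm: "F lam E \<alpha> n (s + real jm * \<alpha>) = X" using Suc.prems(3) jm by auto
  define r where "r = N - (jm + n)"
  have Nr: "N = jm + (n + r)" using jmN by (simp add: r_def)
  have s1: "F lam E \<alpha> N s \<le> F lam E \<alpha> jm s + F lam E \<alpha> (n + r) (s + real jm * \<alpha>)"
    using F_sub[of lam E \<alpha> jm "n+r" s] Nr by simp
  have s2: "F lam E \<alpha> (n + r) (s + real jm * \<alpha>) \<le> F lam E \<alpha> n (s + real jm * \<alpha>) + F lam E \<alpha> r (s + real jm * \<alpha> + real n * \<alpha>)"
    by (rule F_sub)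
  have s3: "F lam E \<alpha> r (s + real jm * \<alpha> + real n * \<alpha>) \<le> g * real r + B" by (rule UB)
  have NN: "real N = real jm + real n + real r" using Nr by simp
  have a1: "g * (real N - real n * real (Suc k)) = g * (real jm - real n * real k) + g * real r"
    unfolding NN by (simp add: algebra_simps)
  have a2: "B * (real (Suc k) + 1) = B * (real k + 1) + B" by (simp add: algebra_simps)
  have a3: "real (Suc k) * X = real k * X + X" by (simp add: algebra_simps)
  show ?case using IH s1 s2 s3 Xjm a1 a2 a3 by linarith
qed

lemma count_hits:
  fixes P :: "real \<Rightarrow> bool"
  assumes q: "q \<ge> 1" and hp: "\<And>x. \<exists>k \<le> R. P (x + real (k*q) * \<alpha>)"
  shows "q * ((N + 1 - n) div (q*(R+1))) \<le> card {j. j + n \<le> N \<and> P (s + real j * \<alpha>)}"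
proof -
  define W where "W = q*(R+1)"
  define nb where "nb = (N + 1 - n) div W"
  define kf where "kf x = (SOME k. k \<le> R \<and> P (x + real (k*q) * \<alpha>))" for x
  have kf: "kf x \<le> R \<and> P (x + real (kf x * q) * \<alpha>)" for x
    using someI_ex[OF hp[of x]] unfolding kf_def by blast
  define gf where "gf = (\<lambda>(i,b). b*W + (i + kf (s + real (b*W + i) * \<alpha>) * q))"
  define S where "S = {..<q} \<times> {..<nb}"
  define T where "T = {j. j + n \<le> N \<and> P (s + real j * \<alpha>)}"
  have Wpos: "W > 0" using q by (simp add: W_def)
  have small: "i + kf x * q < W" if "i < q" for i x
  proof -
    have h: "kf x * q \<le> R * q" using kf[of x] by (simp add: mult_le_mono1)
    have w: "W = R*q + q" by (simp add: W_def algebra_simps)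
    show ?thesis using h that w by linarith
  qed
  have divW: "(b*W + y) div W = b" and modW: "(b*W + y) mod W = y" if "y < W" for b y
    using that Wpos by simp_all
  have inj: "inj_on gf S"
  proof (rule inj_onI)
    fix a a' assume a: "a \<in> S" and a': "a' \<in> S" and eq: "gf a = gf a'"
    obtain i b where ab: "a = (i,b)" by (cases a)
    obtain i' b' where ab': "a' = (i',b')" by (cases a')
    have i: "i < q" and i': "i' < q" using a a' ab ab' by (auto simp: S_def)
    define y where "y = i + kf (s + real (b*W + i) * \<alpha>) * q"
    define y' where "y' = i' + kf (s + real (b'*W + i') * \<alpha>) * q"
    have y: "y < W" using small[OF i] by (simp add: y_def)
    have y': "y' < W" using small[OF i'] by (simp add: y'_def)
    have e: "b*W + y = b'*W + y'" using eq by (simp add: ab ab' gf_def y_def y'_def)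
    have bb: "b = b'" using divW[OF y, of b] divW[OF y', of b'] e by simp
    have yy: "y = y'" using modW[OF y, of b] modW[OF y', of b'] e by simp
    have "y mod q = i" using i by (simp add: y_def)
    moreover have "y' mod q = i'" using i' by (simp add: y'_def)
    ultimately have "i = i'" using yy by simp
    then show "a = a'" using ab ab' bb by simp
  qed
  have sub: "gf ` S \<subseteq> T"
  proof
    fix j assume "j \<in> gf ` S"
    then obtain i b where ib: "i < q" "b < nb" and j: "j = gf (i,b)" by (auto simp: S_def)
    define x where "x = s + real (b*W + i) * \<alpha>"
    have jj: "j = (b*W + i) + kf x * q" by (simp add: j gf_def x_def)
    have "j < b*W + W" using small[OF ib(1), of x] jj by simp
    also have "b*W + W \<le> nb * W"
    proof -
      have "Suc b * W \<le> nb * W" using ib(2) by (intro mult_le_mono1) simp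
      then show ?thesis by simp
    qed
    also have "nb * W \<le> N + 1 - n" by (simp add: nb_def div_times_less_eq_dividend)
    finally have "j + n \<le> N" by linarith
    moreover have "P (s + real j * \<alpha>)"
    proof -
      have "s + real j * \<alpha> = x + real (kf x * q) * \<alpha>" by (simp add: jj x_def algebra_simps)
      then show ?thesis using kf[of x] by simp
    qed
    ultimately show "j \<in> T" by (simp add: T_def)
  qed
  have finT: "finite T" by (rule finite_subset[of _ "{..N}"]) (auto simp: T_def)
  have "card S \<le> card T" by (rule card_inj_on_le[OF inj sub finT])
  moreover have "card S = q * nb" by (simp add: S_def)
  ultimately show ?thesis by (simp add: T_def nb_def W_def)
qed

lemma UB_aux:
  assumes G: "\<And>s. F lam E \<alpha> n0 s \<le> G"
  shows "F lam E \<alpha> (q*n0 + r) s \<le> real q * G + KK lam E * real r"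
proof (induction q arbitrary: s)
  case 0
  then show ?case using F_le[of lam E \<alpha> r s] by simp
next
  case (Suc q)
  have "F lam E \<alpha> (Suc q * n0 + r) s = F lam E \<alpha> (n0 + (q*n0 + r)) s" by (simp add: algebra_simps)
  also have "\<dots> \<le> F lam E \<alpha> n0 s + F lam E \<alpha> (q*n0 + r) (s + real n0 * \<alpha>)" by (rule F_sub)
  also have "\<dots> \<le> G + (real q * G + KK lam E * real r)" using G[of s] Suc.IH[of "s + real n0 * \<alpha>"] by simp
  finally show ?case by (simp add: algebra_simps)
qed

lemma lower_bound:
  fixes \<alpha> c gam \<epsilon> B :: real
  assumes a01: "0 < \<alpha>" "\<alpha> < 1" "\<alpha> \<notin> \<rat>" and c: "0 < c" "c \<le> 1"
    and sp: "\<And>(d::nat) (p::int). d \<ge> 1 \<Longrightarrow> c / real d \<le> \<bar>real d * \<alpha> - of_int p\<bar>"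
    and big: "\<And>N. N \<ge> 1 \<Longrightarrow> \<exists>s. gam * real N - 1 < F lam E \<alpha> N s"
    and UB: "\<And>m s. F lam E \<alpha> m s \<le> (gam + \<epsilon>) * real m + B"
    and B: "B \<ge> 0" and eps: "\<epsilon> \<ge> 0"
    and n: "n \<ge> 1"
  shows "gam * real n - 8 * \<epsilon> * real n / c - 1 - 2 * B \<le> F lam E \<alpha> n \<theta>"
proof -
  define lw where "lw = c / real n"
  have nr: "real n \<ge> 1" using n by simp
  have lw0: "0 < lw" using c n by (simp add: lw_def)
  have lwc: "lw \<le> c" using c nr by (simp add: lw_def divide_le_eq)
  have lw1: "lw \<le> 1" using lwc c by simp
  obtain u where u: "\<And>s. u \<le> s \<Longrightarrow> s < u + lw \<Longrightarrow> vword \<alpha> s n = vword \<alpha> \<theta> n"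
    using cyl[OF a01(1) a01(2) c(1) c(2) sp n, of \<theta>] unfolding lw_def by metis
  obtain q where q: "q \<ge> 1" "lw/2 < frac (real q * \<alpha>)" "frac (real q * \<alpha>) < lw"
    using dens[OF a01(3) lw0 lw1] by metis
  define \<eta> where "\<eta> = frac (real q * \<alpha>)"
  have eta0: "0 < \<eta>" using q(2) lw0 unfolding \<eta>_def by linarith
  define R where "R = nat \<lceil>1/\<eta>\<rceil>"
  define P where "P y = (\<exists>z::int. u \<le> y + of_int z \<and> y + of_int z < u + lw)" for y
  have hp: "\<exists>k \<le> R. P (x + real (k*q) * \<alpha>)" for x
  proof -
    obtain k z where "k \<le> nat \<lceil>1 / frac (real q * \<alpha>)\<rceil>"
      "u \<le> x + real (k*q) * \<alpha> + of_int z" "x + real (k*q) * \<alpha> + of_int z < u + lw"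
      using hit[OF q(1), of \<alpha> lw u x] eta0 q(3) by (auto simp: \<eta>_def)
    then show ?thesis unfolding P_def R_def \<eta>_def by blast
  qed
  define N where "N = nat \<lceil>8 * (real q + real n) / lw\<rceil> + n"
  have N1: "N \<ge> 1" and nN: "n \<le> N" using n by (auto simp: N_def)
  have NL: "8 * (real q + real n) \<le> real N * lw"
  proof -
    have "8 * (real q + real n) / lw \<le> real (nat \<lceil>8 * (real q + real n) / lw\<rceil>)"
      by (rule real_nat_ceiling_ge)
    also have "\<dots> \<le> real N" by (simp add: N_def)
    finally show ?thesis using lw0 by (simp add: divide_le_eq)
  qed
  obtain \<theta>s where \<theta>s: "gam * real N - 1 < F lam E \<alpha> N \<theta>s" using big[OF N1] by blast
  define J where "J = {j. j + n \<le> N \<and> P (\<theta>s + real j * \<alpha>)}"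
  have finJ: "finite J" by (rule finite_subset[of _ "{..N}"]) (auto simp: J_def)
  have cnt: "q * ((N + 1 - n) div (q*(R+1))) \<le> card J"
    unfolding J_def by (rule count_hits[OF q(1) hp])
  have cardJ: "real N * lw / 8 \<le> real (card J)"
  proof -
    define A' where "A' = N + 1 - n"
    define W where "W = q*(R+1)"
    define nb where "nb = A' div W"
    have Wpos: "W > 0" using q(1) by (simp add: W_def)
    have "A' < (nb + 1) * W"
    proof -
      have "A' = nb * W + A' mod W" by (simp add: nb_def)
      moreover have "A' mod W < W" using Wpos by simp
      ultimately show ?thesis by (simp add: algebra_simps)
    qed
    then have "real A' \<le> real ((nb + 1) * (q * (R + 1)))" unfolding W_def by linarith
    moreover have "real ((nb + 1) * (q * (R + 1))) = (real R + 1) * (real q * real nb + real q)"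
      by (simp add: algebra_simps)
    ultimately have h1: "real A' \<le> (real R + 1) * (real q * real nb + real q)" by simp
    have Rle: "(real R + 1) * lw \<le> 4"
    proof -
      have "real R < 1/\<eta> + 1" using ceiling_correct[of "1/\<eta>"] eta0 by (simp add: R_def)
      moreover have "1/\<eta> < 2/lw"
      proof -
        have "lw/2 < \<eta>" using q(2) by (simp add: \<eta>_def)
        then have "1/\<eta> < 1/(lw/2)" using lw0 by (intro divide_strict_left_mono) auto
        then show ?thesis by simp
      qed
      ultimately have "real R + 1 \<le> 2/lw + 2" by linarith
      then have "(real R + 1) * lw \<le> (2/lw + 2) * lw" using lw0 by (intro mult_right_mono) auto
      also have "\<dots> = 2 + 2 * lw" using lw0 by (simp add: field_simps)
      finally show ?thesis using lw1 by linarith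
    qed
    have Qn: "real A' * lw \<le> 4 * (real q * real nb + real q)"
    proof -
      have "real A' * lw \<le> ((real R + 1) * (real q * real nb + real q)) * lw"
        using h1 lw0 by (intro mult_right_mono) auto
      also have "\<dots> = ((real R + 1) * lw) * (real q * real nb + real q)" by (simp add: algebra_simps)
      also have "\<dots> \<le> 4 * (real q * real nb + real q)"
        by (intro mult_right_mono Rle) auto
      finally show ?thesis .
    qed
    have A'r: "real A' = real N + 1 - real n" using nN by (simp add: A'_def)
    have cnt': "real q * real nb \<le> real (card J)"
      using cnt by (simp add: nb_def A'_def W_def flip: of_nat_mult)
    have e1: "real A' * lw = real N * lw + lw - real n * lw" by (simp add: A'r algebra_simps)
    have e2: "real n * lw \<le> real n" using lw1 by (simp add: mult_left_le)
    have Qn': "real A' * lw \<le> 4 * (real q * real nb) + 4 * real q" using Qn by (simp add: distrib_left)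
    have NL': "8 * real q + 8 * real n \<le> real N * lw" using NL by (simp add: distrib_left)
    show ?thesis using Qn' cnt' e1 e2 NL' lw0 by linarith
  qed
  have k1: "1 \<le> real (card J)"
  proof -
    have NL': "8 * real q + 8 * real n \<le> real N * lw" using NL by (simp add: distrib_left)
    then show ?thesis using cardJ q(1) nr by linarith
  qed
  define X where "X = F lam E \<alpha> n \<theta>"
  have P1: "\<forall>j\<in>J. j + n \<le> N \<and> F lam E \<alpha> n (\<theta>s + real j * \<alpha>) = X"
  proof
    fix j assume "j \<in> J"
    then have j: "j + n \<le> N" "P (\<theta>s + real j * \<alpha>)" by (auto simp: J_def)
    then obtain z :: int where z: "u \<le> \<theta>s + real j * \<alpha> + of_int z" "\<theta>s + real j * \<alpha> + of_int z < u + lw"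
      by (auto simp: P_def)
    have "vword \<alpha> (\<theta>s + real j * \<alpha>) n = vword \<alpha> (\<theta>s + real j * \<alpha> + of_int z) n"
      by (simp only: vword_shift_int)
    also have "\<dots> = vword \<alpha> \<theta> n" using u z by blast
    finally show "j + n \<le> N \<and> F lam E \<alpha> n (\<theta>s + real j * \<alpha>) = X"
      using j by (simp add: X_def F_def)
  qed
  have P2: "\<forall>j\<in>J. \<forall>j'\<in>J. j < j' \<longrightarrow> j + n \<le> j'"
  proof (intro ballI impI)
    fix j j' assume jJ: "j \<in> J" and j'J: "j' \<in> J" and jj: "j < j'"
    show "j + n \<le> j'"
    proof (rule ccontr)
      assume "\<not> j + n \<le> j'"
      define d where "d = j' - j"
      have d: "d \<ge> 1" "d < n" using jj \<open>\<not> j + n \<le> j'\<close> by (auto simp: d_def)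
      obtain z :: int where z: "u \<le> \<theta>s + real j * \<alpha> + of_int z" "\<theta>s + real j * \<alpha> + of_int z < u + lw"
        using jJ by (auto simp: J_def P_def)
      obtain z' :: int where z': "u \<le> \<theta>s + real j' * \<alpha> + of_int z'" "\<theta>s + real j' * \<alpha> + of_int z' < u + lw"
        using j'J by (auto simp: J_def P_def)
      have jd: "real j' = real j + real d" using jj by (simp add: d_def)
      have diff: "real d * \<alpha> - of_int (z - z') = (\<theta>s + real j' * \<alpha> + of_int z') - (\<theta>s + real j * \<alpha> + of_int z)"
        by (simp add: jd algebra_simps)
      have "\<bar>real d * \<alpha> - of_int (z - z')\<bar> < lw" unfolding diff using z z' by linarith
      moreover have "c / real d \<le> \<bar>real d * \<alpha> - of_int (z - z')\<bar>" using sp d(1) by blast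
      moreover have "lw < c / real d"
        unfolding lw_def using c d by (intro divide_strict_left_mono) auto
      ultimately show False by linarith
    qed
  qed
  have dec: "F lam E \<alpha> N \<theta>s \<le> (gam + \<epsilon>) * (real N - real n * real (card J)) + B * (real (card J) + 1) + real (card J) * X"
    by (rule abs_decomp[OF UB B finJ refl P1 P2])
  define kr where "kr = real (card J)"
  have m1: "gam * real N - 1 < (gam + \<epsilon>) * (real N - real n * kr) + B * (kr + 1) + kr * X"
    using dec \<theta>s by (simp add: kr_def)
  have m2: "(gam + \<epsilon>) * (real N - real n * kr) = gam * real N - gam * real n * kr + \<epsilon> * real N - \<epsilon> * (real n * kr)"
    by (simp add: algebra_simps)
  have m3: "0 \<le> \<epsilon> * (real n * kr)" using eps k1 by (simp add: kr_def)
  have m4: "\<epsilon> * real N \<le> \<epsilon> * (8 * kr / lw)"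
  proof -
    have "real N \<le> 8 * kr / lw" using cardJ lw0 by (simp add: kr_def field_simps)
    then show ?thesis using eps by (intro mult_left_mono) auto
  qed
  have m5: "B * (kr + 1) \<le> 2 * B * kr"
  proof -
    have "B * 1 \<le> B * kr" using B k1 by (intro mult_left_mono) (auto simp: kr_def)
    then show ?thesis by (simp add: algebra_simps)
  qed
  define Y where "Y = gam * real n - 8 * \<epsilon> / lw - 1 - 2 * B"
  have m6: "kr * Y = gam * real n * kr - \<epsilon> * (8 * kr / lw) - kr - 2 * B * kr"
    by (simp add: Y_def algebra_simps)
  have "kr * Y < kr * X" using m1 m2 m3 m4 m5 m6 k1 by (simp add: kr_def)
  then have "Y < X" using k1 by (simp add: kr_def mult_less_cancel_left_pos)
  moreover have "8 * \<epsilon> / lw = 8 * \<epsilon> * real n / c" using c nr by (simp add: lw_def)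
  ultimately show ?thesis by (simp add: Y_def X_def)
qed

theorem theorem2:
  fixes \<alpha> :: real and a :: "nat \<Rightarrow> nat"
  assumes "0 < \<alpha>" "\<alpha> < 1" "\<alpha> \<notin> \<rat>"
    and "is_cf_expansion \<alpha> a"
    and "bounded (range a)"
  shows "\<forall>lam::real. lam \<noteq> 0 \<longrightarrow> (\<forall>E::complex. \<exists>\<gamma>::real. \<forall>\<theta>\<in>{0..<1}.
           (\<lambda>n. ln (opnorm (Mmat lam E (vword \<alpha> \<theta> n))) / real n) \<longlonglongrightarrow> \<gamma>)"
proof (intro allI impI)
  fix lam :: real and E :: complex
  obtain A where A: "A \<ge> 1" "\<And>n. a n \<le> A" using bounded_nat_range[OF assms(5)] by metis
  obtain c where c: "0 < c" "c \<le> 1"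
    and sp: "\<And>(d::nat) (p::int). d \<ge> 1 \<Longrightarrow> c / real d \<le> \<bar>real d * \<alpha> - of_int p\<bar>"
    using badly[OF assms(4) A(2) A(1)] by metis
  define G where "G n = (SUP s. F lam E \<alpha> n s)" for n
  have bdd: "bdd_above (range (F lam E \<alpha> n))" for n
    by (rule bdd_aboveI[where M="KK lam E * real n"]) (auto intro: F_le)
  have FG: "F lam E \<alpha> n s \<le> G n" for n s
    unfolding G_def by (rule cSUP_upper[OF UNIV_I bdd])
  have G0: "0 \<le> G n" for n using F_nonneg[of lam E \<alpha> n 0] FG[of n 0] by linarith
  define gam where "gam = (INF n\<in>{1..}. G n / real n)"
  have bddb: "bdd_below ((\<lambda>n. G n / real n) ` {1..})"
    using G0 by (auto intro!: bdd_belowI2[where m=0])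
  have gamle: "gam \<le> G n / real n" if "n \<ge> 1" for n
    unfolding gam_def by (rule cINF_lower[OF bddb]) (use that in simp)
  have gam0: "0 \<le> gam"
    unfolding gam_def by (rule cINF_greatest) (use G0 in auto)
  have big: "\<exists>s. gam * real N - 1 < F lam E \<alpha> N s" if N: "N \<ge> 1" for N
  proof -
    have "gam * real N \<le> G N" using gamle[OF N] N by (simp add: field_simps)
    then have "gam * real N - 1 < (SUP s. F lam E \<alpha> N s)" by (simp add: G_def)
    then show ?thesis using less_cSUP_iff[of UNIV "F lam E \<alpha> N", OF _ bdd] by auto
  qed
  have UBe: "\<exists>B\<ge>0. \<forall>m s. F lam E \<alpha> m s \<le> (gam + \<epsilon>) * real m + B" if eps: "\<epsilon> > 0" for \<epsilon>
  proof -
    have ne: "{1::nat..} \<noteq> {}" by auto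
    have l: "(INF n\<in>{1..}. G n / real n) < gam + \<epsilon>" unfolding gam_def[symmetric] using eps by simp
    then obtain n0 where n0: "n0 \<in> {1..}" "G n0 / real n0 < gam + \<epsilon>"
      using cINF_less_iff[OF ne bddb] by blast
    have n0r: "real n0 \<ge> 1" using n0(1) by simp
    have Gn0: "G n0 \<le> (gam + \<epsilon>) * real n0" using n0(2) n0r by (simp add: field_simps)
    define B where "B = KK lam E * real n0"
    have B0: "B \<ge> 0" using KK_nonneg n0r by (simp add: B_def)
    have "F lam E \<alpha> m s \<le> (gam + \<epsilon>) * real m + B" for m s
    proof -
      define qq where "qq = m div n0"
      define rr where "rr = m mod n0"
      have mqr: "m = qq * n0 + rr" by (simp add: qq_def rr_def)
      have "F lam E \<alpha> m s \<le> real qq * G n0 + KK lam E * real rr"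
        unfolding mqr by (rule UB_aux[OF FG])
      also have "real qq * G n0 \<le> real qq * ((gam + \<epsilon>) * real n0)"
        using Gn0 by (intro mult_left_mono) auto
      also have "\<dots> = (gam + \<epsilon>) * real (qq * n0)" by (simp add: algebra_simps)
      also have "\<dots> \<le> (gam + \<epsilon>) * real m"
        using gam0 eps by (intro mult_left_mono) (auto simp: mqr)
      also have "KK lam E * real rr \<le> B"
      proof -
        have "rr < n0" using n0(1) by (simp add: rr_def)
        then show ?thesis unfolding B_def using KK_nonneg by (intro mult_left_mono) auto
      qed
      finally show ?thesis by simp
    qed
    then show ?thesis using B0 by blast
  qed
  show "\<exists>\<gamma>::real. \<forall>\<theta>\<in>{0..<1}. (\<lambda>n. ln (opnorm (Mmat lam E (vword \<alpha> \<theta> n))) / real n) \<longlonglongrightarrow> \<gamma>"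
  proof (intro exI ballI)
    fix \<theta> :: real
    show "(\<lambda>n. ln (opnorm (Mmat lam E (vword \<alpha> \<theta> n))) / real n) \<longlonglongrightarrow> gam"
    proof (rule LIMSEQ_I)
      fix r :: real assume r: "0 < r"
      define \<epsilon> where "\<epsilon> = r * c / 32"
      have eps: "\<epsilon> > 0" using r c by (simp add: \<epsilon>_def)
      obtain B where B: "B \<ge> 0" "\<And>m s. F lam E \<alpha> m s \<le> (gam + \<epsilon>) * real m + B"
        using UBe[OF eps] by blast
      define no where "no = nat \<lceil>4 * (1 + 2 * B) / r\<rceil> + 1"
      show "\<exists>no. \<forall>n\<ge>no. norm (ln (opnorm (Mmat lam E (vword \<alpha> \<theta> n))) / real n - gam) < r"
      proof (intro exI allI impI)
        fix n assume nno: "no \<le> n"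
        have n1: "n \<ge> 1" using nno by (simp add: no_def)
        have nr: "real n \<ge> 1" using n1 by simp
        have nbig: "4 * (1 + 2 * B) \<le> r * real n"
        proof -
          have "4 * (1 + 2 * B) / r \<le> real (nat \<lceil>4 * (1 + 2 * B) / r\<rceil>)" by (rule real_nat_ceiling_ge)
          also have "\<dots> \<le> real n"
          proof -
            have h: "nat \<lceil>4 * (1 + 2 * B) / r\<rceil> \<le> n" using nno unfolding no_def by linarith
            then show ?thesis by (simp only: of_nat_le_iff)
          qed
          finally show ?thesis using r by (simp add: divide_le_eq mult.commute)
        qed
        define Fv where "Fv = F lam E \<alpha> n \<theta>"
        have up: "Fv \<le> (gam + \<epsilon>) * real n + B" using B(2) by (simp add: Fv_def)
        have lo: "gam * real n - 8 * \<epsilon> * real n / c - 1 - 2 * B \<le> Fv"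
          unfolding Fv_def by (rule lower_bound[OF assms(1,2,3) c sp big B(2) B(1) less_imp_le[OF eps] n1])
        have e8: "8 * \<epsilon> * real n / c = r * real n / 4" using c by (simp add: \<epsilon>_def)
        have en: "\<epsilon> * real n \<le> r * real n / 4"
        proof -
          have "\<epsilon> \<le> r / 4" using r c by (simp add: \<epsilon>_def)
          then show ?thesis using nr by (simp add: mult_right_mono)
        qed
        have rn: "0 < r * real n" using r nr by simp
        have d1: "Fv - gam * real n \<le> \<epsilon> * real n + B" using up by (simp add: algebra_simps)
        have d2: "gam * real n - Fv \<le> r * real n / 4 + 1 + 2 * B" using lo e8 by linarith
        have nbig': "4 + 8 * B \<le> r * real n" using nbig by (simp add: distrib_left)
        have "\<bar>Fv - gam * real n\<bar> < r * real n" using d1 d2 en nbig' B(1) rn by linarith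
        then have "\<bar>Fv - gam * real n\<bar> / real n < r" using nr by (simp add: divide_less_eq)
        moreover have "Fv / real n - gam = (Fv - gam * real n) / real n" using nr by (simp add: field_simps)
        ultimately show "norm (ln (opnorm (Mmat lam E (vword \<alpha> \<theta> n))) / real n - gam) < r"
          by (simp add: Fv_def F_def abs_divide)
      qed
    qed
  qed
qed

end
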